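(* Let $U\subseteq\widetilde{\mathbb C}$ be sharply open, $z_0\in U$ and $f\in\mathcal{GH}(U)$. Assume $f(z_0)=0$ and that there exists $n\in\mathbb N_{>0}$ with $f^{(n)}(z_0)\neq0$. Then there exist $L\subseteq_0 I$ and $r\in\widetilde{\mathbb R}_{>0}$ such that for every $z\in B_r(z_0)$ with $|z-z_0|>0$, the restriction $f(z)|_L$ is invertible.
   Context: Fix $I=(0,1]$ and a gauge $\rho=(\rho_\varepsilon)_{\varepsilon\in I}$ with $\rho_\varepsilon\in I$ and $\rho_\varepsilon\to0$ as $\varepsilon\to0$. "$\forall^0\varepsilon$" means "for all sufficiently small $\varepsilon\in I$". A net $(x_\varepsilon)\in\mathbb C^I$ is $\rho$-moderate ($(x_\varepsilon)\in\mathbb C_\rho$) if $\exists N\in\mathbb N\,\forall^0\varepsilon:|x_\varepsilon|\le\rho_\varepsilon^{-N}$, and $\rho$-negligible if $\forall q\in\mathbb N\,\forall^0\varepsilon:|x_\varepsilon|\le\rho_\varepsilon^q$. $\widetilde{\mathbb C}:=\mathbb C_\rho/\{\text{negligible nets}\}$ with classes $[x_\varepsilon]$; $\widetilde{\mathbb R}\subseteq\widetilde{\mathbb C}$ consists of classes of real moderate nets; $|[z_\varepsilon]|:=[|z_\varepsilon|]$. On $\widetilde{\mathbb R}$: $[x_\varepsilon]\le[y_\varepsilon]$ iff $x_\varepsilon\le y_\varepsilon+z_\varepsilon$ $\forall^0\varepsilon$ for some negligible $(z_\varepsilon)$; $x<y$ iff $\exists m\,\forall^0\varepsilon:y_\varepsilon-x_\varepsilon>\rho_\varepsilon^m$;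 $\widetilde{\mathbb R}_{>0}:=\{x:x>0\}$. The sharp topology on $\widetilde{\mathbb C}$ is generated by $B_r(c):=\{z:|z-c|<r\}$, $r\in\widetilde{\mathbb R}_{>0}$. $L\subseteq_0 I$ means $L\subseteq I$ and $0$ is an accumulation point of $L$; for $x=[x_\varepsilon]\in\widetilde{\mathbb C}$, "$x|_L$ is invertible" means $\exists m\in\mathbb N$ with $|x_\varepsilon|>\rho_\varepsilon^m$ for all sufficiently small $\varepsilon\in L$. Generalized holomorphic functions: for $U\subseteq\widetilde{\mathbb C}$ sharply open, $f\in\mathcal{GH}(U)$ means $f:U\to\widetilde{\mathbb C}$ and there exist open sets $\Omega_\varepsilon\subseteq\mathbb C$ and holomorphic $f_\varepsilon:\Omega_\varepsilon\to\mathbb C$ such that for every $z\in U$ and every representative $z=[z_\varepsilon]$: $z_\varepsilon\in\Omega_\varepsilon$ $\forall^0\varepsilon$, $f(z)=[f_\varepsilon(z_\varepsilon)]$, and $(f_\varepsilon^{(k)}(z_\varepsilon))\in\mathbb C_\rho$ for all $k\in\mathbb N$; $f^{(k)}(z):=[f^{(k)}_\varepsilon(z_\varepsilon)]$. *)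

theory Defs
  imports "HOL-Analysis.Analysis"
begin

text \<open>Nets are functions real \<Rightarrow> complex; only their values on I = (0,1] near 0 matter.
  "for all sufficiently small eps" is the filter at_right 0.
  Generalized numbers are equivalence classes (sets of moderate nets).\<close>

definition gauge :: "(real \<Rightarrow> real) \<Rightarrow> bool" where
  "gauge rho \<longleftrightarrow> (\<forall>e\<in>{0<..1}. rho e \<in> {0<..1}) \<and> (rho \<longlongrightarrow> 0) (at_right 0)"

definition moderate :: "(real \<Rightarrow> real) \<Rightarrow> (real \<Rightarrow> complex) \<Rightarrow> bool" where
  "moderate rho x \<longleftrightarrow> (\<exists>N::nat. eventually (\<lambda>e. norm (x e) \<le> inverse (rho e ^ N)) (at_right 0))"

definition negligible :: "(real \<Rightarrow> real) \<Rightarrow> (real \<Rightarrow> complex) \<Rightarrow> bool" where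
  "negligible rho x \<longleftrightarrow> (\<forall>q::nat. eventually (\<lambda>e. norm (x e) \<le> rho e ^ q) (at_right 0))"

definition gclass :: "(real \<Rightarrow> real) \<Rightarrow> (real \<Rightarrow> complex) \<Rightarrow> (real \<Rightarrow> complex) set" where
  "gclass rho x = {y. moderate rho y \<and> negligible rho (\<lambda>e. y e - x e)}"

definition Ctilde :: "(real \<Rightarrow> real) \<Rightarrow> (real \<Rightarrow> complex) set set" where
  "Ctilde rho = {gclass rho x | x. moderate rho x}"

definition Rtilde :: "(real \<Rightarrow> real) \<Rightarrow> (real \<Rightarrow> complex) set set" where
  "Rtilde rho = {gclass rho x | x. moderate rho x \<and> (\<forall>e. x e \<in> \<real>)}"

definition rep :: "(real \<Rightarrow> complex) set \<Rightarrow> (real \<Rightarrow> complex)" where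
  "rep z = (SOME x. x \<in> z)"

definition gzero :: "(real \<Rightarrow> real) \<Rightarrow> (real \<Rightarrow> complex) set" where
  "gzero rho = gclass rho (\<lambda>e. 0)"

definition gminus :: "(real \<Rightarrow> real) \<Rightarrow> (real \<Rightarrow> complex) set \<Rightarrow> (real \<Rightarrow> complex) set \<Rightarrow> (real \<Rightarrow> complex) set" where
  "gminus rho z c = gclass rho (\<lambda>e. rep z e - rep c e)"

definition gabs :: "(real \<Rightarrow> real) \<Rightarrow> (real \<Rightarrow> complex) set \<Rightarrow> (real \<Rightarrow> complex) set" where
  "gabs rho z = gclass rho (\<lambda>e. complex_of_real (cmod (rep z e)))"

definition glt :: "(real \<Rightarrow> real) \<Rightarrow> (real \<Rightarrow> complex) set \<Rightarrow> (real \<Rightarrow> complex) set \<Rightarrow> bool" where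
  "glt rho x y \<longleftrightarrow> (\<exists>xe\<in>x. \<exists>ye\<in>y. (\<forall>e. xe e \<in> \<real> \<and> ye e \<in> \<real>) \<and>
     (\<exists>m::nat. eventually (\<lambda>e. Re (ye e) - Re (xe e) > rho e ^ m) (at_right 0)))"

definition Rpos :: "(real \<Rightarrow> real) \<Rightarrow> (real \<Rightarrow> complex) set set" where
  "Rpos rho = {r \<in> Rtilde rho. glt rho (gzero rho) r}"

definition gball :: "(real \<Rightarrow> real) \<Rightarrow> (real \<Rightarrow> complex) set \<Rightarrow> (real \<Rightarrow> complex) set \<Rightarrow> (real \<Rightarrow> complex) set set" where
  "gball rho r c = {z \<in> Ctilde rho. glt rho (gabs rho (gminus rho z c)) r}"

definition sharply_open :: "(real \<Rightarrow> real) \<Rightarrow> (real \<Rightarrow> complex) set set \<Rightarrow> bool" where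
  "sharply_open rho U \<longleftrightarrow> U \<subseteq> Ctilde rho \<and>
     generate_topology {gball rho r c | r c. r \<in> Rpos rho \<and> c \<in> Ctilde rho} U"

definition GH_rep :: "(real \<Rightarrow> real) \<Rightarrow> (real \<Rightarrow> complex) set set \<Rightarrow> (real \<Rightarrow> complex set) \<Rightarrow>
    (real \<Rightarrow> complex \<Rightarrow> complex) \<Rightarrow> ((real \<Rightarrow> complex) set \<Rightarrow> (real \<Rightarrow> complex) set) \<Rightarrow> bool" where
  "GH_rep rho U Om fe f \<longleftrightarrow>
     (\<forall>e\<in>{0<..1}. open (Om e) \<and> fe e holomorphic_on Om e) \<and>
     (\<forall>z\<in>U. f z \<in> Ctilde rho \<and>
        (\<forall>ze\<in>z. eventually (\<lambda>e. ze e \<in> Om e) (at_right 0) \<and>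
                 f z = gclass rho (\<lambda>e. fe e (ze e)) \<and>
                 (\<forall>k. moderate rho (\<lambda>e. (deriv ^^ k) (fe e) (ze e)))))"

definition gderiv :: "(real \<Rightarrow> real) \<Rightarrow> (real \<Rightarrow> complex \<Rightarrow> complex) \<Rightarrow> nat \<Rightarrow>
    (real \<Rightarrow> complex) set \<Rightarrow> (real \<Rightarrow> complex) set" where
  "gderiv rho fe k z = gclass rho (\<lambda>e. (deriv ^^ k) (fe e) (rep z e))"

definition subset0 :: "real set \<Rightarrow> bool" where
  "subset0 L \<longleftrightarrow> L \<subseteq> {0<..1} \<and> (0::real) islimpt L"

definition invertible_on :: "(real \<Rightarrow> real) \<Rightarrow> real set \<Rightarrow> (real \<Rightarrow> complex) set \<Rightarrow> bool" where
  "invertible_on rho L x \<longleftrightarrow> (\<exists>xe\<in>x. \<exists>m::nat.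
     eventually (\<lambda>e. e \<in> L \<longrightarrow> norm (xe e) > rho e ^ m) (at_right 0))"

end

theory Submission
  imports Defs "HOL-Complex_Analysis.Cauchy_Integral_Formula"
begin

lemma taylor_lower:
  fixes g :: "complex \<Rightarrow> complex" and rho :: real
  assumes Om: "open Om" "g holomorphic_on Om"
    and B: "\<And>w. cmod (w - x0) \<le> rho ^ N \<Longrightarrow> w \<in> Om \<and> cmod ((deriv ^^ Suc n) g w) \<le> inverse (rho ^ N)"
    and r: "0 < rho" "rho \<le> 1/2" "rho \<le> 1 / (4 * fact n)"
    and d: "rho ^ p < cmod (z - x0)" "cmod (z - x0) \<le> rho ^ (q + N + 1)"
    and an: "cmod ((deriv ^^ n) g x0) > rho ^ q"
    and sm: "(\<Sum>i<n. cmod ((deriv ^^ i) g x0)) \<le> rho ^ (q + p * n + 2)"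
  shows "cmod (g z) > rho ^ (q + p * n + 1)"
proof -
  define S where "S = cball x0 (rho ^ N)"
  define \<delta> where "\<delta> = cmod (z - x0)"
  have rle1: "rho \<le> 1" using r by simp
  have SOm: "S \<subseteq> Om" using B by (auto simp: S_def dist_norm norm_minus_commute)
  have pN: "rho ^ (q + N + 1) \<le> rho ^ N"
    by (rule power_decreasing) (use r in auto)
  have zS: "z \<in> S" using d pN by (auto simp: S_def dist_norm norm_minus_commute)
  have x0S: "x0 \<in> S" using r by (auto simp: S_def)
  have T: "cmod ((deriv ^^ 0) g z - (\<Sum>i\<le>n. (deriv ^^ i) g x0 * (z-x0) ^ i / (fact i)))
        \<le> inverse (rho ^ N) * cmod (z - x0)^(Suc n) / fact n"
  proof (rule complex_Taylor[where S = S])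
    show "convex S" by (simp add: S_def)
    fix i x assume "x \<in> S" "i \<le> n"
    then have "x \<in> Om" using SOm by auto
    have "(deriv ^^ i) g holomorphic_on Om" using Om holomorphic_higher_deriv by blast
    then show "((deriv ^^ i) g has_field_derivative (deriv ^^ Suc i) g x) (at x within S)"
      using holomorphic_derivI[OF _ Om(1) \<open>x \<in> Om\<close>] by simp
  next
    fix x assume "x \<in> S" then show "cmod ((deriv ^^ Suc n) g x) \<le> inverse (rho ^ N)"
      using B by (auto simp: S_def dist_norm norm_minus_commute)
  qed (use zS x0S in auto)
  define A where "A = (\<Sum>i<n. (deriv ^^ i) g x0 * (z-x0) ^ i / (fact i))"
  define a where "a = (deriv ^^ n) g x0 * (z-x0) ^ n / (fact n)"
  have split: "(\<Sum>i\<le>n. (deriv ^^ i) g x0 * (z-x0) ^ i / (fact i)) = A + a"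
    by (simp add: A_def a_def lessThan_Suc_atMost[symmetric])
  have d1: "\<delta> \<le> 1" using d(2) r \<delta>_def power_le_one[of rho "q+N+1"] by linarith
  have d0: "0 \<le> \<delta>" by (simp add: \<delta>_def)
  have A: "cmod A \<le> rho ^ (q + p * n + 2)"
  proof -
    have "cmod A \<le> (\<Sum>i<n. cmod ((deriv ^^ i) g x0 * (z-x0) ^ i / (fact i)))"
      unfolding A_def by (rule norm_sum)
    also have "\<dots> \<le> (\<Sum>i<n. cmod ((deriv ^^ i) g x0))"
    proof (rule sum_mono)
      fix i
      have "cmod ((z-x0) ^ i / (fact i)) \<le> 1"
      proof -
        have "cmod ((z-x0) ^ i / (fact i)) = \<delta> ^ i / fact i"
          by (simp add: \<delta>_def norm_divide norm_power)
        also have "\<dots> \<le> \<delta> ^ i" using d0 by (simp add: divide_le_eq fact_ge_1 mult_le_cancel_left1)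
        also have "\<dots> \<le> 1" using d0 d1 by (simp add: power_le_one)
        finally show ?thesis .
      qed
      then show "cmod ((deriv ^^ i) g x0 * (z-x0) ^ i / (fact i)) \<le> cmod ((deriv ^^ i) g x0)"
        by (metis mult_left_le norm_ge_zero norm_mult times_divide_eq_right)
    qed
    finally show ?thesis using sm by linarith
  qed
  have fn: "0 < (fact n :: real)" by simp
  have a: "cmod a \<ge> rho ^ q * \<delta> ^ n / fact n"
    unfolding a_def using an d0
    by (simp add: norm_divide norm_mult norm_power \<delta>_def divide_right_mono mult_right_mono)
  have R: "inverse (rho ^ N) * \<delta> ^ Suc n / fact n \<le> (rho ^ q / 2) * \<delta> ^ n / fact n"
  proof -
    have "inverse (rho ^ N) * \<delta> \<le> inverse (rho ^ N) * rho ^ (q + N + 1)"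
      using d(2) r by (simp add: \<delta>_def)
    also have "\<dots> = rho ^ q * rho" using r by (simp add: power_add)
    also have "\<dots> \<le> rho ^ q / 2" using r by (simp add: mult_left_le_one_le)
    finally have "inverse (rho ^ N) * \<delta> \<le> rho ^ q / 2" .
    then have "inverse (rho ^ N) * \<delta> * \<delta> ^ n \<le> (rho ^ q / 2) * \<delta> ^ n"
      using mult_right_mono[OF _ zero_le_power[OF d0, of n]] by blast
    then have "inverse (rho ^ N) * \<delta> ^ Suc n \<le> (rho ^ q / 2) * \<delta> ^ n"
      by (simp add: mult.assoc)
    then show ?thesis using fn by (rule divide_right_mono[OF _ less_imp_le])
  qed
  have gz: "cmod (g z) \<ge> cmod a - cmod A - (rho ^ q / 2) * \<delta> ^ n / fact n"
  proof -
    have "cmod (g z - (A + a)) \<le> (rho ^ q / 2) * \<delta> ^ n / fact n"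
      using T R split by (simp add: \<delta>_def)
    moreover have "cmod a \<le> cmod (g z) + cmod A + cmod (g z - (A + a))"
    proof -
      have "a = (g z - A) - (g z - (A + a))" by simp
      then have "cmod a \<le> cmod (g z - A) + cmod (g z - (A + a))"
        by (metis norm_triangle_ineq4)
      moreover have "cmod (g z - A) \<le> cmod (g z) + cmod A" by (rule norm_triangle_ineq4)
      ultimately show ?thesis by linarith
    qed
    ultimately show ?thesis by linarith
  qed
  define M where "M = q + p * n"
  have dn: "rho ^ (p * n) \<le> \<delta> ^ n"
    using d(1) r by (simp add: power_mult \<delta>_def power_mono)
  have main: "rho ^ q * \<delta> ^ n / fact n - (rho ^ q / 2) * \<delta> ^ n / fact n \<ge> 2 * rho ^ (M + 1)"
  proof -
    have "rho ^ q * \<delta> ^ n / fact n - (rho ^ q / 2) * \<delta> ^ n / fact n = rho ^ q * \<delta> ^ n / (2 * fact n)"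
      by (simp add: field_simps)
    also have "\<dots> \<ge> rho ^ q * rho ^ (p * n) / (2 * fact n)"
      using dn r by (simp add: divide_right_mono mult_left_mono)
    also have "rho ^ q * rho ^ (p * n) = rho ^ M" by (simp add: M_def power_add)
    finally have 1: "rho ^ M / (2 * fact n) \<le> rho ^ q * \<delta> ^ n / fact n - (rho ^ q / 2) * \<delta> ^ n / fact n" .
    have "2 * rho ^ (M + 1) = rho ^ M * (2 * rho)" by simp
    also have "\<dots> \<le> rho ^ M * (1 / (2 * fact n))"
      using r by (intro mult_left_mono) (auto simp: field_simps)
    finally show ?thesis using 1 by simp
  qed
  have "rho ^ (M + 2) < rho ^ (M + 1)" using r by (intro power_strict_decreasing) auto
  then show ?thesis using gz a A main unfolding M_def by (smt (verit) add_2_eq_Suc' add_Suc_right)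
qed

abbreviation ev :: "(real \<Rightarrow> bool) \<Rightarrow> bool" where "ev P \<equiv> eventually P (at_right 0)"

lemma ev_I01: "ev (\<lambda>e. e \<in> {0<..1})"
proof -
  have "ev (\<lambda>e. 0 < e)" by (rule eventually_at_right_less)
  moreover have "ev (\<lambda>e. e < 1)" unfolding eventually_at_right_field by (auto intro!: exI[of _ 1])
  ultimately show ?thesis by eventually_elim auto
qed

lemma rho_ev: assumes "gauge rho" shows "ev (\<lambda>e. 0 < rho e \<and> rho e \<le> 1)"
  using ev_I01 by eventually_elim (use assms in \<open>auto simp: gauge_def\<close>)

lemma rho_small: assumes "gauge rho" "c > 0" shows "ev (\<lambda>e. rho e < c)"
  using assms order_tendstoD(2)[of rho 0 "at_right 0" c] by (auto simp: gauge_def)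

lemma rho_ev2: assumes "gauge rho" shows "ev (\<lambda>e. 0 < rho e \<and> rho e \<le> 1/2)"
proof -
  have "ev (\<lambda>e. rho e < 1/2)" by (rule rho_small[OF assms]) simp
  then show ?thesis using rho_ev[OF assms] by eventually_elim auto
qed

lemma negligible_mono: assumes "negligible rho b" "ev (\<lambda>e. cmod (a e) \<le> cmod (b e))"
  shows "negligible rho a"
  unfolding negligible_def
proof
  fix q show "ev (\<lambda>e. cmod (a e) \<le> rho e ^ q)"
    using assms(2) assms(1)[unfolded negligible_def, rule_format, of q] by eventually_elim auto
qed

lemma negligible_add: assumes g: "gauge rho" and "negligible rho a" "negligible rho b"
  shows "negligible rho (\<lambda>e. a e + b e)"
  unfolding negligible_def
proof
  fix q
  show "ev (\<lambda>e. cmod (a e + b e) \<le> rho e ^ q)"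
    using assms(2,3)[unfolded negligible_def, rule_format, of "Suc q"] rho_ev2[OF g]
  proof eventually_elim
    case (elim e)
    have "rho e ^ Suc q = rho e * rho e ^ q" by simp
    also have "\<dots> \<le> (1/2) * rho e ^ q" using elim by (intro mult_right_mono) auto
    finally have "rho e ^ Suc q \<le> rho e ^ q / 2" by simp
    then show ?case using elim norm_triangle_ineq[of "a e" "b e"] by linarith
  qed
qed

lemma negligible_uminus: "negligible rho a \<Longrightarrow> negligible rho (\<lambda>e. - a e)"
  by (rule negligible_mono) auto

lemma negligible_diff: "gauge rho \<Longrightarrow> negligible rho a \<Longrightarrow> negligible rho b \<Longrightarrow> negligible rho (\<lambda>e. a e - b e)"
  using negligible_add[of rho a "\<lambda>e. - b e"] negligible_uminus[of rho b] by simp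

lemma negligible_zero: assumes g: "gauge rho" shows "negligible rho (\<lambda>e. 0)"
  unfolding negligible_def
proof
  fix q show "ev (\<lambda>e. cmod 0 \<le> rho e ^ q)"
    using rho_ev[OF g] by eventually_elim auto
qed

lemma negligible_sum: "gauge rho \<Longrightarrow> (\<And>i. i < (n::nat) \<Longrightarrow> negligible rho (a i)) \<Longrightarrow> negligible rho (\<lambda>e. \<Sum>i<n. a i e)"
  by (induction n) (auto intro: negligible_add negligible_zero)

lemma negligible_cmod: "negligible rho a \<Longrightarrow> negligible rho (\<lambda>e. of_real (cmod (a e)))"
  by (rule negligible_mono) auto

lemma inv_step: assumes "0 < (r::real)" "r \<le> 1/2" shows "2 * inverse (r ^ N) \<le> inverse (r ^ Suc N)"
proof -
  have i: "inverse r \<ge> 2" using assms by (metis le_imp_inverse_le inverse_divide div_by_1)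
  have "inverse (r ^ Suc N) = inverse r * inverse (r ^ N)" by simp
  moreover have "2 * inverse (r ^ N) \<le> inverse r * inverse (r ^ N)"
    using mult_right_mono[OF i, of "inverse (r ^ N)"] assms by simp
  ultimately show ?thesis by simp
qed

lemma moderate_add: assumes g: "gauge rho" and "moderate rho a" "negligible rho b"
  shows "moderate rho (\<lambda>e. a e + b e)"
proof -
  obtain N where N: "ev (\<lambda>e. cmod (a e) \<le> inverse (rho e ^ N))" using assms(2) by (auto simp: moderate_def)
  have "ev (\<lambda>e. cmod (a e + b e) \<le> inverse (rho e ^ Suc N))"
    using N assms(3)[unfolded negligible_def, rule_format, of 0] rho_ev2[OF g]
  proof eventually_elim
    case (elim e)
    have "inverse (rho e ^ N) \<ge> 1" using elim by (simp add: one_le_inverse power_le_one)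
    moreover have "inverse (rho e ^ Suc N) \<ge> 2 * inverse (rho e ^ N)"
      using inv_step elim by blast
    moreover have "cmod (b e) \<le> 1" using elim by simp
    ultimately show ?case using elim norm_triangle_ineq[of "a e" "b e"] by linarith
  qed
  then show ?thesis unfolding moderate_def by blast
qed

lemma gclass_mem: "y \<in> gclass rho x \<longleftrightarrow> moderate rho y \<and> negligible rho (\<lambda>e. y e - x e)"
  by (simp add: gclass_def)

lemma gclass_self: "gauge rho \<Longrightarrow> moderate rho x \<Longrightarrow> x \<in> gclass rho x"
  by (simp add: gclass_mem negligible_zero)

lemma gclass_eq: assumes g: "gauge rho" and "moderate rho x" "negligible rho (\<lambda>e. x e - y e)"
  shows "gclass rho x = gclass rho y"
proof -
  have my: "moderate rho y"
    using moderate_add[OF g assms(2) negligible_uminus[OF assms(3)]] by simp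
  show ?thesis
  proof (auto simp: gclass_mem)
    fix z assume "moderate rho z" "negligible rho (\<lambda>e. z e - x e)"
    then show "negligible rho (\<lambda>e. z e - y e)"
      using negligible_add[OF g _ assms(3)] by force
  next
    fix z assume "moderate rho z" "negligible rho (\<lambda>e. z e - y e)"
    then show "negligible rho (\<lambda>e. z e - x e)"
      using negligible_diff[OF g _ assms(3)] by force
  qed
qed

lemma Ctilde_D: assumes "z \<in> Ctilde rho" obtains x where "moderate rho x" "z = gclass rho x"
  using assms by (auto simp: Ctilde_def)

lemma Ctilde_rep: assumes g: "gauge rho" and "z \<in> Ctilde rho" shows "rep z \<in> z"
proof -
  obtain x where "moderate rho x" "z = gclass rho x" using assms Ctilde_D by blast
  then have "x \<in> z" using gclass_self[OF g] by blast
  then show ?thesis unfolding rep_def by (rule someI[where P="\<lambda>x. x \<in> z"])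
qed

lemma Ctilde_mem: assumes g: "gauge rho" and "z \<in> Ctilde rho" "a \<in> z" shows "z = gclass rho a"
proof -
  obtain x where x: "moderate rho x" "z = gclass rho x" using assms Ctilde_D by blast
  then have "moderate rho a" "negligible rho (\<lambda>e. a e - x e)" using assms(3) gclass_mem by auto
  then show ?thesis using x gclass_eq[OF g] by metis
qed

lemma mem_moderate: "a \<in> gclass rho x \<Longrightarrow> moderate rho a" by (simp add: gclass_mem)

lemma Ctilde_mem_moderate: "z \<in> Ctilde rho \<Longrightarrow> a \<in> z \<Longrightarrow> moderate rho a"
  by (auto simp: Ctilde_def gclass_mem)

lemma Ctilde_two: assumes g: "gauge rho" and "z \<in> Ctilde rho" "a \<in> z" "b \<in> z"
  shows "negligible rho (\<lambda>e. a e - b e)"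
  using Ctilde_mem[OF assms(1,2,3)] assms(4) gclass_mem[of b rho a] negligible_uminus[of rho "\<lambda>e. b e - a e"]
  by simp

lemma moderate_diff_mod: assumes g: "gauge rho" and "moderate rho a" "moderate rho b"
  shows "moderate rho (\<lambda>e. a e - b e)"
proof -
  obtain N where N: "ev (\<lambda>e. cmod (a e) \<le> inverse (rho e ^ N))" using assms(2) by (auto simp: moderate_def)
  obtain M where M: "ev (\<lambda>e. cmod (b e) \<le> inverse (rho e ^ M))" using assms(3) by (auto simp: moderate_def)
  have "ev (\<lambda>e. cmod (a e - b e) \<le> inverse (rho e ^ Suc (N + M)))"
    using N M rho_ev2[OF g]
  proof eventually_elim
    case (elim e)
    have r: "0 < rho e" "rho e \<le> 1/2" using elim by auto
    have 1: "inverse (rho e ^ N) \<le> inverse (rho e ^ (N + M))"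
      using r by (simp add: le_imp_inverse_le power_decreasing)
    have 2: "inverse (rho e ^ M) \<le> inverse (rho e ^ (N + M))"
      using r by (simp add: le_imp_inverse_le power_decreasing)
    have "inverse (rho e ^ Suc (N+M)) \<ge> 2 * inverse (rho e ^ (N+M))"
      using inv_step r by blast
    then show ?case using elim 1 2 norm_triangle_ineq4[of "a e" "b e"] by linarith
  qed
  then show ?thesis unfolding moderate_def by blast
qed

lemma moderate_cmod: "moderate rho a \<Longrightarrow> moderate rho (\<lambda>e. of_real (cmod (a e)))"
  by (simp add: moderate_def)

lemma gabs_gminus: assumes g: "gauge rho" and "z \<in> Ctilde rho" "c \<in> Ctilde rho" "zr \<in> z" "cr \<in> c"
  shows "gabs rho (gminus rho z c) = gclass rho (\<lambda>e. of_real (cmod (zr e - cr e)))"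
proof -
  have mz: "moderate rho (rep z)" "moderate rho (rep c)"
    using Ctilde_rep[OF g] assms Ctilde_mem_moderate by blast+
  have d: "moderate rho (\<lambda>e. rep z e - rep c e)" by (rule moderate_diff_mod[OF g mz])
  have w: "gminus rho z c \<in> Ctilde rho" using d by (auto simp: gminus_def Ctilde_def)
  have rw: "rep (gminus rho z c) \<in> gclass rho (\<lambda>e. rep z e - rep c e)"
    using Ctilde_rep[OF g w] by (simp add: gminus_def)
  have n1: "negligible rho (\<lambda>e. rep z e - zr e)" "negligible rho (\<lambda>e. rep c e - cr e)"
    using Ctilde_two[OF g] Ctilde_rep[OF g] assms by blast+
  have n2: "negligible rho (\<lambda>e. rep (gminus rho z c) e - (rep z e - rep c e))"
    using rw by (simp add: gclass_mem)
  have n3: "negligible rho (\<lambda>e. rep (gminus rho z c) e - (zr e - cr e))"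
  proof -
    have "negligible rho (\<lambda>e. (rep (gminus rho z c) e - (rep z e - rep c e)) + ((rep z e - zr e) - (rep c e - cr e)))"
      by (intro negligible_add[OF g] negligible_diff[OF g] n1 n2)
    then show ?thesis by (simp add: algebra_simps)
  qed
  have n4: "negligible rho (\<lambda>e. of_real (cmod (rep (gminus rho z c) e)) - of_real (cmod (zr e - cr e)))"
  proof (rule negligible_mono[OF n3], rule always_eventually, rule allI)
    fix e
    have "\<bar>cmod (rep (gminus rho z c) e) - cmod (zr e - cr e)\<bar> \<le> cmod (rep (gminus rho z c) e - (zr e - cr e))"
      by (rule norm_triangle_ineq3)
    then show "cmod (complex_of_real (cmod (rep (gminus rho z c) e)) - complex_of_real (cmod (zr e - cr e)))
         \<le> cmod (rep (gminus rho z c) e - (zr e - cr e))"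
      by (metis norm_of_real of_real_diff real_norm_def)
  qed
  have m5: "moderate rho (\<lambda>e. of_real (cmod (rep (gminus rho z c) e)))"
    using Ctilde_mem_moderate[OF w Ctilde_rep[OF g w]] moderate_cmod by blast
  show ?thesis unfolding gabs_def by (rule gclass_eq[OF g m5 n4])
qed

lemma glt_gclass: assumes g: "gauge rho" and "moderate rho x" "moderate rho y"
    "\<forall>e. x e \<in> \<real> \<and> y e \<in> \<real>"
  shows "glt rho (gclass rho x) (gclass rho y) \<longleftrightarrow> (\<exists>m::nat. ev (\<lambda>e. Re (y e) - Re (x e) > rho e ^ m))"
proof
  assume "\<exists>m::nat. ev (\<lambda>e. Re (y e) - Re (x e) > rho e ^ m)"
  then show "glt rho (gclass rho x) (gclass rho y)"
    unfolding glt_def using gclass_self[OF g] assms by blast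
next
  assume "glt rho (gclass rho x) (gclass rho y)"
  then obtain xe ye m where xe: "xe \<in> gclass rho x" and ye: "ye \<in> gclass rho y"
    and m: "ev (\<lambda>e. Re (ye e) - Re (xe e) > rho e ^ m)"
    unfolding glt_def by blast
  have nx: "negligible rho (\<lambda>e. xe e - x e)" and ny: "negligible rho (\<lambda>e. ye e - y e)"
    using xe ye gclass_mem by blast+
  have "ev (\<lambda>e. Re (y e) - Re (x e) > rho e ^ Suc m)"
    using m nx[unfolded negligible_def, rule_format, of "Suc (Suc m)"]
      ny[unfolded negligible_def, rule_format, of "Suc (Suc m)"] rho_ev2[OF g]
  proof eventually_elim
    case (elim e)
    have r: "0 < rho e" "rho e \<le> 1/2" using elim by auto
    have a: "\<bar>Re (xe e) - Re (x e)\<bar> \<le> rho e ^ Suc (Suc m)"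
      using elim abs_Re_le_cmod[of "xe e - x e"] by simp
    have b: "\<bar>Re (ye e) - Re (y e)\<bar> \<le> rho e ^ Suc (Suc m)"
      using elim abs_Re_le_cmod[of "ye e - y e"] by simp
    have "rho e ^ Suc (Suc m) = rho e * rho e ^ Suc m" by simp
    also have "\<dots> \<le> (1/2) * rho e ^ Suc m" using r by (intro mult_right_mono) auto
    finally have c: "rho e ^ Suc (Suc m) \<le> rho e ^ Suc m / 2" by simp
    have "rho e ^ Suc m = rho e * rho e ^ m" by simp
    also have "\<dots> \<le> (1/2) * rho e ^ m" using r by (intro mult_right_mono) auto
    finally have d: "rho e ^ Suc m \<le> rho e ^ m / 2" by simp
    show ?case using a b c d elim by linarith
  qed
  then show "\<exists>m::nat. ev (\<lambda>e. Re (y e) - Re (x e) > rho e ^ m)" by blast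
qed

definition rpow :: "(real \<Rightarrow> real) \<Rightarrow> nat \<Rightarrow> (real \<Rightarrow> complex) set" where
  "rpow rho k = gclass rho (\<lambda>e. of_real (rho e ^ k))"

lemma rpow_moderate: assumes g: "gauge rho" shows "moderate rho (\<lambda>e. of_real (rho e ^ k))"
  unfolding moderate_def
proof (rule exI[of _ 0])
  show "ev (\<lambda>e. cmod (complex_of_real (rho e ^ k)) \<le> inverse (rho e ^ 0))"
    using rho_ev[OF g] by eventually_elim (simp add: power_le_one norm_power)
qed

lemma pow_half: assumes "0 < (r::real)" "r \<le> 1/2" shows "r ^ Suc m \<le> r ^ m / 2"
proof -
  have "r ^ Suc m = r * r ^ m" by simp
  also have "\<dots> \<le> (1/2) * r ^ m" using assms by (intro mult_right_mono) auto
  finally show ?thesis by simp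
qed

lemma rpow_Rpos: assumes g: "gauge rho" shows "rpow rho k \<in> Rpos rho"
proof -
  have R: "rpow rho k \<in> Rtilde rho" unfolding rpow_def Rtilde_def using rpow_moderate[OF g] by auto
  have "glt rho (gclass rho (\<lambda>e. 0)) (gclass rho (\<lambda>e. of_real (rho e ^ k)))"
  proof (subst glt_gclass[OF g])
    show "moderate rho (\<lambda>e. 0)" using Ctilde_mem_moderate gclass_self[OF g] negligible_zero[OF g]
      by (auto simp: moderate_def negligible_def)
    show "\<exists>m. ev (\<lambda>e. rho e ^ m < Re (complex_of_real (rho e ^ k)) - Re 0)"
    proof (intro exI[of _ "Suc k"])
      show "ev (\<lambda>e. rho e ^ Suc k < Re (complex_of_real (rho e ^ k)) - Re 0)"
        using rho_ev2[OF g]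
      proof eventually_elim
        case (elim e)
        then have "rho e ^ Suc k \<le> rho e ^ k / 2" "rho e ^ k > 0" using pow_half by auto
        then show ?case by simp
      qed
    qed
  qed (use rpow_moderate[OF g] in auto)
  then show ?thesis using R by (simp add: Rpos_def gzero_def rpow_def)
qed

lemma Rtilde_D: assumes "r \<in> Rtilde rho" obtains rr where "moderate rho rr" "\<forall>e. rr e \<in> \<real>" "r = gclass rho rr"
  using assms by (auto simp: Rtilde_def)

lemma gball_char: assumes g: "gauge rho" and c: "c \<in> Ctilde rho" "cr \<in> c"
  and rr: "moderate rho rr" "\<forall>e. rr e \<in> \<real>"
  shows "z \<in> gball rho (gclass rho rr) c \<longleftrightarrow>
     z \<in> Ctilde rho \<and> (\<exists>m::nat. ev (\<lambda>e. Re (rr e) - cmod (rep z e - cr e) > rho e ^ m))"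
proof (cases "z \<in> Ctilde rho")
  case True
  have "gabs rho (gminus rho z c) = gclass rho (\<lambda>e. of_real (cmod (rep z e - cr e)))"
    by (rule gabs_gminus[OF g True c(1) Ctilde_rep[OF g True] c(2)])
  moreover have "moderate rho (\<lambda>e. of_real (cmod (rep z e - cr e)))"
    by (intro moderate_cmod moderate_diff_mod[OF g] Ctilde_mem_moderate[OF True Ctilde_rep[OF g True]]
        Ctilde_mem_moderate[OF c])
  ultimately show ?thesis using True glt_gclass[OF g _ rr(1)] rr(2) by (simp add: gball_def)
qed (simp add: gball_def)

lemma gball_rpow: assumes g: "gauge rho" and c: "c \<in> Ctilde rho" "cr \<in> c"
  shows "z \<in> gball rho (rpow rho k) c \<longleftrightarrow>
     z \<in> Ctilde rho \<and> (\<exists>m::nat. ev (\<lambda>e. rho e ^ k - cmod (rep z e - cr e) > rho e ^ m))"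
  unfolding rpow_def using gball_char[OF g c rpow_moderate[OF g]] by simp

lemma gball_rpow_mono: assumes g: "gauge rho" and c: "c \<in> Ctilde rho" and "k \<le> k'"
  shows "gball rho (rpow rho k') c \<subseteq> gball rho (rpow rho k) c"
proof
  fix z assume "z \<in> gball rho (rpow rho k') c"
  then obtain m where z: "z \<in> Ctilde rho" and m: "ev (\<lambda>e. rho e ^ k' - cmod (rep z e - rep c e) > rho e ^ m)"
    using gball_rpow[OF g c Ctilde_rep[OF g c]] by blast
  have "ev (\<lambda>e. rho e ^ k - cmod (rep z e - rep c e) > rho e ^ m)"
    using m rho_ev[OF g]
  proof eventually_elim
    case (elim e)
    then have "rho e ^ k' \<le> rho e ^ k" using \<open>k \<le> k'\<close> by (simp add: power_decreasing)
    then show ?case using elim by linarith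
  qed
  then show "z \<in> gball rho (rpow rho k) c" using gball_rpow[OF g c Ctilde_rep[OF g c]] z by blast
qed

lemma gball_Ctilde: "gball rho r c \<subseteq> Ctilde rho" by (auto simp: gball_def)

lemma basis_ball: assumes g: "gauge rho" and r: "r \<in> Rpos rho" and c: "c \<in> Ctilde rho"
  and z0: "z0 \<in> gball rho r c"
  shows "\<exists>k. gball rho (rpow rho k) z0 \<subseteq> gball rho r c"
proof -
  obtain rr where rr: "moderate rho rr" "\<forall>e. rr e \<in> \<real>" "r = gclass rho rr"
    using r Rtilde_D by (auto simp: Rpos_def)
  note cr = Ctilde_rep[OF g c]
  have z0C: "z0 \<in> Ctilde rho" using z0 gball_Ctilde by blast
  note x0 = Ctilde_rep[OF g z0C]
  obtain m where m: "ev (\<lambda>e. Re (rr e) - cmod (rep z0 e - rep c e) > rho e ^ m)"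
    using z0 gball_char[OF g c cr rr(1,2)] rr(3) by blast
  have "gball rho (rpow rho (Suc m)) z0 \<subseteq> gball rho r c"
  proof
    fix z assume "z \<in> gball rho (rpow rho (Suc m)) z0"
    then obtain m' where z: "z \<in> Ctilde rho" and m': "ev (\<lambda>e. rho e ^ Suc m - cmod (rep z e - rep z0 e) > rho e ^ m')"
      using gball_rpow[OF g z0C x0] by blast
    have "ev (\<lambda>e. Re (rr e) - cmod (rep z e - rep c e) > rho e ^ Suc m)"
      using m m' rho_ev2[OF g]
    proof eventually_elim
      case (elim e)
      have "cmod (rep z e - rep c e) \<le> cmod (rep z e - rep z0 e) + cmod (rep z0 e - rep c e)"
        by (metis diff_add_cancel norm_triangle_ineq add_diff_eq diff_diff_eq2)
      moreover have "rho e ^ Suc m \<le> rho e ^ m / 2" using pow_half elim by blast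
      moreover have "rho e ^ m' > 0" using elim by simp
      ultimately show ?case using elim by linarith
    qed
    then show "z \<in> gball rho r c" using gball_char[OF g c cr rr(1,2)] rr(3) z by blast
  qed
  then show ?thesis by blast
qed

lemma open_ball_aux: assumes g: "gauge rho"
  shows "generate_topology {gball rho r c | r c. r \<in> Rpos rho \<and> c \<in> Ctilde rho} W \<Longrightarrow>
    \<forall>z0\<in>W \<inter> Ctilde rho. \<exists>k. gball rho (rpow rho k) z0 \<subseteq> W"
proof (induction rule: generate_topology.induct)
  case UNIV then show ?case by auto
next
  case (Int a b)
  show ?case
  proof
    fix z0 assume z0: "z0 \<in> a \<inter> b \<inter> Ctilde rho"
    then obtain k1 k2 where "gball rho (rpow rho k1) z0 \<subseteq> a" "gball rho (rpow rho k2) z0 \<subseteq> b"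
      using Int.IH by blast
    moreover have "gball rho (rpow rho (max k1 k2)) z0 \<subseteq> gball rho (rpow rho k1) z0"
      "gball rho (rpow rho (max k1 k2)) z0 \<subseteq> gball rho (rpow rho k2) z0"
      using gball_rpow_mono[OF g] z0 by auto
    ultimately show "\<exists>k. gball rho (rpow rho k) z0 \<subseteq> a \<inter> b" by blast
  qed
next
  case (UN K)
  show ?case
  proof
    fix z0 assume "z0 \<in> \<Union> K \<inter> Ctilde rho"
    then obtain k0 where "k0 \<in> K" "z0 \<in> k0 \<inter> Ctilde rho" by blast
    then show "\<exists>k. gball rho (rpow rho k) z0 \<subseteq> \<Union> K" using UN.IH by blast
  qed
next
  case (Basis s)
  then obtain r c where "s = gball rho r c" "r \<in> Rpos rho" "c \<in> Ctilde rho" by blast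
  then show ?case using basis_ball[OF g] by blast
qed

lemma open_ball: assumes g: "gauge rho" and "sharply_open rho U" "z0 \<in> U"
  shows "\<exists>k. gball rho (rpow rho k) z0 \<subseteq> U"
  using open_ball_aux[OF g] assms unfolding sharply_open_def by blast

primrec seqE :: "(nat \<Rightarrow> real \<Rightarrow> real) \<Rightarrow> nat \<Rightarrow> real" where
  "seqE E 0 = E 0 1"
| "seqE E (Suc N) = E (Suc N) (min (seqE E N) (1 / (real N + 2)))"

lemma unif_bound:
  assumes g: "gauge rho" and GH: "GH_rep rho U Om fe f" and z0U: "z0 \<in> U"
    and z0C: "z0 \<in> Ctilde rho" and x0: "x0 \<in> z0"
  shows "\<exists>N. ev (\<lambda>e. \<forall>w. cmod (w - x0 e) \<le> rho e ^ N \<longrightarrow>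
            w \<in> Om e \<and> cmod ((deriv ^^ K) (fe e) w) \<le> inverse (rho e ^ N))"
proof (rule ccontr)
  define good where "good N e \<longleftrightarrow> (\<forall>w. cmod (w - x0 e) \<le> rho e ^ N \<longrightarrow>
            w \<in> Om e \<and> cmod ((deriv ^^ K) (fe e) w) \<le> inverse (rho e ^ N))" for N e
  assume "\<not> ?thesis"
  then have ng: "\<not> ev (good N)" for N unfolding good_def by blast
  have bad: "\<exists>e. 0 < e \<and> e < b \<and> \<not> good N e" if "b > 0" for N b
    using ng[of N] that unfolding eventually_at_right_field by blast
  define E where "E N b = (SOME e. 0 < e \<and> e < b \<and> \<not> good N e)" for N b
  have E: "0 < E N b \<and> E N b < b \<and> \<not> good N (E N b)" if "b > 0" for N b
    unfolding E_def using someI_ex[OF bad[OF that]] .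
  define eps where "eps = seqE E"
  have pos: "0 < eps N" for N
  proof (induction N)
    case 0 then show ?case using E[of 1 0] by (simp add: eps_def)
  next
    case (Suc N)
    then have "min (eps N) (1 / (real N + 2)) > 0" by simp
    then show ?case using E by (simp add: eps_def)
  qed
  have eps_Suc: "eps (Suc N) < eps N \<and> eps (Suc N) < 1 / (real N + 2) \<and> \<not> good (Suc N) (eps (Suc N))" for N
  proof -
    have "min (eps N) (1 / (real N + 2)) > 0" using pos by simp
    then show ?thesis using E[of "min (eps N) (1 / (real N + 2))" "Suc N"] by (simp add: eps_def)
  qed
  have eps_bad: "\<not> good N (eps N)" for N
    using eps_Suc E[of 1 0] by (cases N) (auto simp: eps_def)
  have eps_le1: "eps N \<le> 1" for N
  proof (cases N)
    case 0 then show ?thesis using E[of 1 0] by (simp add: eps_def)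
  next
    case (Suc m)
    have "1 / (real m + 2) \<le> 1" by simp
    then have "eps (Suc m) \<le> 1" using eps_Suc[of m] by linarith
    then show ?thesis using Suc by simp
  qed
  have anti: "n < m \<Longrightarrow> eps m < eps n" for n m
    using lift_Suc_mono_less[of "\<lambda>n. - eps n" n m] eps_Suc by auto
  have anti_le: "n \<le> m \<Longrightarrow> eps m \<le> eps n" for n m
    using anti by (cases "n = m") (auto simp: order.order_iff_strict)
  have inj: "inj eps"
  proof (rule injI)
    fix a b assume "eps a = eps b"
    then show "a = b" using anti by (metis less_irrefl nat_neq_iff)
  qed
  define P where "P N e w \<longleftrightarrow> cmod (w - x0 e) \<le> rho e ^ N \<and>
      (w \<notin> Om e \<or> cmod ((deriv ^^ K) (fe e) w) > inverse (rho e ^ N))" for N e w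
  define W where "W N e = (SOME w. P N e w)" for N e
  have WP: "P N (eps N) (W N (eps N))" for N
  proof -
    have "\<exists>w. P N (eps N) w" using eps_bad[of N] unfolding good_def P_def by auto
    then show ?thesis unfolding W_def by (rule someI_ex)
  qed
  define z where "z e = (if e \<in> range eps then W (inv eps e) e else x0 e)" for e
  have zeps: "z (eps N) = W N (eps N)" for N
    using inv_f_f[OF inj] by (simp add: z_def)
  have rho01: "0 < rho e \<and> rho e \<le> 1" if "0 < e" "e \<le> 1" for e
    using g that by (auto simp: gauge_def)
  have negl: "negligible rho (\<lambda>e. z e - x0 e)"
    unfolding negligible_def
  proof
    fix q
    show "ev (\<lambda>e. cmod (z e - x0 e) \<le> rho e ^ q)"
      unfolding eventually_at_right_field
    proof (intro exI[of _ "eps q"] conjI allI impI)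
      show "0 < eps q" by (rule pos)
      fix y :: real assume y: "0 < y" "y < eps q"
      then have y1: "y \<le> 1" using eps_le1[of q] by linarith
      show "cmod (z y - x0 y) \<le> rho y ^ q"
      proof (cases "y \<in> range eps")
        case True
        then obtain N where N: "y = eps N" by blast
        then have "q < N" using y anti_le by (meson not_le)
        have "cmod (z y - x0 y) \<le> rho y ^ N" using WP[of N] zeps[of N] N by (simp add: P_def)
        also have "\<dots> \<le> rho y ^ q" using rho01[OF y(1) y1] \<open>q < N\<close> by (simp add: power_decreasing)
        finally show ?thesis .
      next
        case False
        then show ?thesis using rho01[OF y(1) y1] by (simp add: z_def)
      qed
    qed
  qed
  have mx0: "moderate rho x0" by (rule Ctilde_mem_moderate[OF z0C x0])
  have mz: "moderate rho z" using moderate_add[OF g mx0 negl] by simp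
  have zz0: "z \<in> z0" using Ctilde_mem[OF g z0C x0] mz negl by (simp add: gclass_mem)
  have zOm: "ev (\<lambda>e. z e \<in> Om e)" and zmod: "moderate rho (\<lambda>e. (deriv ^^ K) (fe e) (z e))"
    using GH z0U zz0 unfolding GH_rep_def by blast+
  obtain M where M: "ev (\<lambda>e. cmod ((deriv ^^ K) (fe e) (z e)) \<le> inverse (rho e ^ M))"
    using zmod by (auto simp: moderate_def)
  have "ev (\<lambda>e. z e \<in> Om e \<and> cmod ((deriv ^^ K) (fe e) (z e)) \<le> inverse (rho e ^ M) \<and> 0 < rho e \<and> rho e \<le> 1)"
    using zOm M rho_ev[OF g] by eventually_elim auto
  then obtain b where b: "b > 0" and bP: "\<And>y. 0 < y \<Longrightarrow> y < b \<Longrightarrow>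
      z y \<in> Om y \<and> cmod ((deriv ^^ K) (fe y) (z y)) \<le> inverse (rho y ^ M) \<and> 0 < rho y \<and> rho y \<le> 1"
    unfolding eventually_at_right_field by blast
  obtain N0 where N0: "inverse (real (Suc N0)) < b" using reals_Archimedean[OF b] by blast
  define N where "N = Suc (max M N0)"
  have "eps N < 1 / (real (max M N0) + 2)" using eps_Suc by (simp add: N_def)
  also have "\<dots> \<le> inverse (real (Suc N0))" by (simp add: inverse_eq_divide frac_le)
  finally have epsb: "eps N < b" using N0 by linarith
  note bN = bP[OF pos epsb]
  have MN: "M \<le> N" by (simp add: N_def)
  have iMN: "inverse (rho (eps N) ^ M) \<le> inverse (rho (eps N) ^ N)"
    using bN MN by (simp add: le_imp_inverse_le power_decreasing)
  have "W N (eps N) \<in> Om (eps N)" "cmod ((deriv ^^ K) (fe (eps N)) (W N (eps N))) \<le> inverse (rho (eps N) ^ M)"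
    using bN zeps[of N] by auto
  then show False using WP[of N] iMN unfolding P_def by linarith
qed

theorem theorem3p5:
  fixes rho :: "real \<Rightarrow> real"
    and U :: "(real \<Rightarrow> complex) set set"
    and z0 :: "(real \<Rightarrow> complex) set"
    and Om :: "real \<Rightarrow> complex set"
    and fe :: "real \<Rightarrow> complex \<Rightarrow> complex"
    and f :: "(real \<Rightarrow> complex) set \<Rightarrow> (real \<Rightarrow> complex) set"
  assumes "gauge rho"
    and "sharply_open rho U"
    and "z0 \<in> U"
    and "GH_rep rho U Om fe f"
    and "f z0 = gzero rho"
    and "\<exists>n::nat. n > 0 \<and> gderiv rho fe n z0 \<noteq> gzero rho"
  shows "\<exists>L r. subset0 L \<and> r \<in> Rpos rho \<and>
           (\<forall>z\<in>gball rho r z0. glt rho (gzero rho) (gabs rho (gminus rho z z0))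
               \<longrightarrow> invertible_on rho L (f z))"
proof -
  note g = assms(1) and Uo = assms(2) and z0U = assms(3) and GH = assms(4)
  have z0C: "z0 \<in> Ctilde rho" using Uo z0U by (auto simp: sharply_open_def)
  define x0 where "x0 = rep z0"
  have x0: "x0 \<in> z0" unfolding x0_def by (rule Ctilde_rep[OF g z0C])
  define D where "D k e = (deriv ^^ k) (fe e) (x0 e)" for k e
  have GHz0: "f z0 = gclass rho (\<lambda>e. fe e (x0 e))" "\<And>k. moderate rho (D k)"
    using GH z0U x0 unfolding GH_rep_def D_def by blast+
  have "D 0 = (\<lambda>e. fe e (x0 e))" by (simp add: D_def fun_eq_iff)
  then have mfe: "moderate rho (\<lambda>e. fe e (x0 e))" using GHz0(2)[of 0] by simp
  have D0: "negligible rho (D 0)"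
  proof -
    have "(\<lambda>e. fe e (x0 e)) \<in> gclass rho (\<lambda>e. 0)"
      using gclass_self[OF g mfe] GHz0(1) assms(5) by (simp add: gzero_def)
    then show ?thesis using \<open>D 0 = (\<lambda>e. fe e (x0 e))\<close> by (simp add: gclass_mem)
  qed
  have ex: "\<exists>n. 0 < n \<and> \<not> negligible rho (D n)"
  proof -
    obtain n0 where n0: "n0 > 0" "gderiv rho fe n0 z0 \<noteq> gzero rho" using assms(6) by blast
    have "gderiv rho fe n0 z0 = gclass rho (D n0)" unfolding gderiv_def D_def x0_def by (rule refl)
    then have "\<not> negligible rho (D n0)"
      using n0 gclass_eq[OF g GHz0(2)[of n0], of "\<lambda>e. 0"] by (auto simp: gzero_def)
    then show ?thesis using n0 by blast
  qed
  define n where "n = (LEAST n. 0 < n \<and> \<not> negligible rho (D n))"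
  have n: "0 < n" "\<not> negligible rho (D n)" using LeastI_ex[OF ex] unfolding n_def by auto
  have lown: "negligible rho (D i)" if "i < n" for i
  proof (cases "i = 0")
    case True then show ?thesis using D0 by simp
  next
    case False then show ?thesis using not_less_Least[of i "\<lambda>n. 0 < n \<and> \<not> negligible rho (D n)"] that
      unfolding n_def by auto
  qed
  obtain q where q: "\<not> ev (\<lambda>e. cmod (D n e) \<le> rho e ^ q)" using n(2) unfolding negligible_def by blast
  define L where "L = {e \<in> {0<..1}. cmod (D n e) > rho e ^ q}"
  have L: "subset0 L"
    unfolding subset0_def
  proof
    show "L \<subseteq> {0<..1}" by (auto simp: L_def)
    show "0 islimpt L"
      unfolding islimpt_approachable
    proof (intro allI impI)
      fix d :: real assume "d > 0"
      then have "min d 1 > 0" by simp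
      then obtain y where "0 < y" "y < min d 1" "\<not> cmod (D n y) \<le> rho y ^ q"
        using q unfolding eventually_at_right_field by blast
      then show "\<exists>x'\<in>L. x' \<noteq> 0 \<and> dist x' 0 < d" by (intro bexI[of _ y]) (auto simp: L_def)
    qed
  qed
  obtain N where N: "ev (\<lambda>e. \<forall>w. cmod (w - x0 e) \<le> rho e ^ N \<longrightarrow>
            w \<in> Om e \<and> cmod ((deriv ^^ Suc n) (fe e) w) \<le> inverse (rho e ^ N))"
    using unif_bound[OF g GH z0U z0C x0] by blast
  obtain kU where kU: "gball rho (rpow rho kU) z0 \<subseteq> U" using open_ball[OF g Uo z0U] by blast
  define k where "k = max kU (q + N + 1)"
  have sub: "gball rho (rpow rho k) z0 \<subseteq> U"
    using gball_rpow_mono[OF g z0C, of kU k] kU by (auto simp: k_def)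
  have sumneg: "negligible rho (\<lambda>e. \<Sum>i<n. of_real (cmod (D i e)))"
    by (intro negligible_sum[OF g] negligible_cmod lown)
  have fpos: "1 / (4 * fact n) > (0::real)" by simp
  show ?thesis
  proof (intro exI conjI ballI impI)
    show "subset0 L" by (rule L)
    show "rpow rho k \<in> Rpos rho" by (rule rpow_Rpos[OF g])
    fix z assume zb: "z \<in> gball rho (rpow rho k) z0"
      and zpos: "glt rho (gzero rho) (gabs rho (gminus rho z z0))"
    have zC: "z \<in> Ctilde rho" and zU: "z \<in> U" using zb sub gball_Ctilde by blast+
    define zr where "zr = rep z"
    have zr: "zr \<in> z" unfolding zr_def by (rule Ctilde_rep[OF g zC])
    obtain m where m: "ev (\<lambda>e. rho e ^ k - cmod (zr e - x0 e) > rho e ^ m)"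
      using zb gball_rpow[OF g z0C x0] unfolding zr_def by blast
    have mabs: "moderate rho (\<lambda>e. of_real (cmod (zr e - x0 e)))"
      by (intro moderate_cmod moderate_diff_mod[OF g] Ctilde_mem_moderate[OF zC zr]
          Ctilde_mem_moderate[OF z0C x0])
    have m0: "moderate rho (\<lambda>e. 0)" using gclass_self[OF g] negligible_zero[OF g]
      by (auto simp: moderate_def negligible_def)
    obtain p where p: "ev (\<lambda>e. cmod (zr e - x0 e) > rho e ^ p)"
    proof -
      have "glt rho (gclass rho (\<lambda>e. 0)) (gclass rho (\<lambda>e. of_real (cmod (zr e - x0 e))))"
        using zpos gabs_gminus[OF g zC z0C zr x0] by (simp add: gzero_def)
      then show ?thesis using that glt_gclass[OF g m0 mabs] by auto
    qed
    have fz: "f z = gclass rho (\<lambda>e. fe e (zr e))" and mfz: "moderate rho (\<lambda>e. (deriv ^^ 0) (fe e) (zr e))"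
      using GH zU zr unfolding GH_rep_def by blast+
    have xe: "(\<lambda>e. fe e (zr e)) \<in> f z" using fz gclass_self[OF g] mfz by simp
    have hol: "ev (\<lambda>e. open (Om e) \<and> fe e holomorphic_on Om e)"
      using ev_I01 by eventually_elim (use GH in \<open>auto simp: GH_rep_def\<close>)
    have sumb: "ev (\<lambda>e. cmod (\<Sum>i<n. of_real (cmod (D i e))) \<le> rho e ^ (q + p * n + 2))"
      using sumneg unfolding negligible_def by blast
    have "ev (\<lambda>e. e \<in> L \<longrightarrow> cmod (fe e (zr e)) > rho e ^ (q + p * n + 1))"
      using hol N m p sumb rho_ev2[OF g] rho_small[OF g fpos]
    proof eventually_elim
      case (elim e)
      show ?case
      proof
        assume "e \<in> L"
        then have an: "cmod (D n e) > rho e ^ q" by (simp add: L_def)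
        have s: "(\<Sum>i<n. cmod (D i e)) \<le> rho e ^ (q + p * n + 2)"
        proof -
          have "cmod (\<Sum>i<n. complex_of_real (cmod (D i e))) = (\<Sum>i<n. cmod (D i e))"
          proof -
            have "(\<Sum>i<n. complex_of_real (cmod (D i e))) = of_real (\<Sum>i<n. cmod (D i e))" by simp
            moreover have "(\<Sum>i<n. cmod (D i e)) \<ge> 0" by (simp add: sum_nonneg)
            ultimately show ?thesis by (simp only: norm_of_real)
          qed
          then show ?thesis using elim by simp
        qed
        have kk: "rho e ^ k \<le> rho e ^ (q + N + 1)"
          using elim by (intro power_decreasing) (auto simp: k_def)
        have d2: "cmod (zr e - x0 e) \<le> rho e ^ (q + N + 1)"
        proof -
          have "rho e ^ m > 0" using elim by simp
          then show ?thesis using elim kk by linarith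
        qed
        have o1: "open (Om e)" and o2: "fe e holomorphic_on Om e" using elim by auto
        have B: "\<And>w. cmod (w - x0 e) \<le> rho e ^ N \<Longrightarrow>
            w \<in> Om e \<and> cmod ((deriv ^^ Suc n) (fe e) w) \<le> inverse (rho e ^ N)" using elim by blast
        have r1: "0 < rho e" and r2: "rho e \<le> 1/2" and r3: "rho e \<le> 1 / (4 * fact n)" using elim by auto
        have d1: "rho e ^ p < cmod (zr e - x0 e)" using elim by auto
        have an': "cmod ((deriv ^^ n) (fe e) (x0 e)) > rho e ^ q" using an by (simp add: D_def)
        have s': "(\<Sum>i<n. cmod ((deriv ^^ i) (fe e) (x0 e))) \<le> rho e ^ (q + p * n + 2)"
          using s by (simp add: D_def)
        show "cmod (fe e (zr e)) > rho e ^ (q + p * n + 1)"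
          by (rule taylor_lower[OF o1 o2 B r1 r2 r3 d1 d2 an' s'])
      qed
    qed
    then have H: "\<exists>m::nat. ev (\<lambda>e. e \<in> L \<longrightarrow> rho e ^ m < cmod (fe e (zr e)))" by blast
    show "invertible_on rho L (f z)" unfolding invertible_on_def by (rule bexI[where x="\<lambda>e. fe e (zr e)", OF _ xe]) (rule H)
  qed
qed

end
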